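(* Let $k$ be a positive integer and $m$ an integer with $1\leq m<k$. If integers $p_k,p_m$ satisfy $p_k>0$ and $p_m\geq p_k+\left\lfloor\frac{k}{m}\right\rfloor-1$, then there exists a connected graph $G$ such that $\psi_k(G)=p_k$ and $\psi_m(G)=p_m$.
   Context: All graphs are finite, simple and nonempty. For a graph $G$ and a positive integer $k$, a $k$-path vertex cover ($k$-PVC) of $G$ is a set $S$ of vertices such that every path on $k$ vertices in $G$ contains at least one vertex of $S$ (if $G$ has no path on $k$ vertices, the empty set is a $k$-PVC). $\psi_k(G)$ denotes the minimum cardinality of a $k$-PVC of $G$. *)

theory Defs
  imports Complex_Main
begin

definition graph :: "'a set \<Rightarrow> ('a \<Rightarrow> 'a \<Rightarrow> bool) \<Rightarrow> bool" where
  "graph V E \<longleftrightarrow> finite V \<and> V \<noteq> {} \<and> (\<forall>u v. E u v \<longrightarrow> u \<in> V \<and> v \<in> V)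
     \<and> (\<forall>u v. E u v \<longrightarrow> E v u) \<and> (\<forall>v. \<not> E v v)"

definition connected_graph :: "'a set \<Rightarrow> ('a \<Rightarrow> 'a \<Rightarrow> bool) \<Rightarrow> bool" where
  "connected_graph V E \<longleftrightarrow> (\<forall>u\<in>V. \<forall>v\<in>V. E\<^sup>*\<^sup>* u v)"

definition is_path :: "'a set \<Rightarrow> ('a \<Rightarrow> 'a \<Rightarrow> bool) \<Rightarrow> 'a list \<Rightarrow> bool" where
  "is_path V E xs \<longleftrightarrow> xs \<noteq> [] \<and> distinct xs \<and> set xs \<subseteq> V
     \<and> (\<forall>i. Suc i < length xs \<longrightarrow> E (xs ! i) (xs ! Suc i))"

definition is_kpvc :: "'a set \<Rightarrow> ('a \<Rightarrow> 'a \<Rightarrow> bool) \<Rightarrow> nat \<Rightarrow> 'a set \<Rightarrow> bool" where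
  "is_kpvc V E k S \<longleftrightarrow> S \<subseteq> V \<and>
     (\<forall>xs. is_path V E xs \<and> length xs = k \<longrightarrow> set xs \<inter> S \<noteq> {})"

definition psi :: "nat \<Rightarrow> 'a set \<Rightarrow> ('a \<Rightarrow> 'a \<Rightarrow> bool) \<Rightarrow> nat" where
  "psi k V E = (LEAST n. \<exists>S. is_kpvc V E k S \<and> card S = n)"

end

theory Submission
  imports Defs begin

lemma is_path_succ: "is_path V E xs \<longleftrightarrow> xs \<noteq> [] \<and> distinct xs \<and> set xs \<subseteq> V \<and> successively E xs"
  unfolding is_path_def successively_conv_nth by auto

lemma is_path_take: "is_path V E xs \<Longrightarrow> 0 < n \<Longrightarrow> n \<le> length xs \<Longrightarrow> is_path V E (take n xs)"
  unfolding is_path_def using set_take_subset[of n xs] by auto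

lemma psi_eqI:
  assumes "is_kpvc V E k S0" "card S0 = p" "\<And>S. is_kpvc V E k S \<Longrightarrow> p \<le> card S"
  shows "psi k V E = p"
  unfolding psi_def
  by (rule Least_equality) (use assms in auto)

lemma same_block:
  assumes "successively E xs" "set xs \<subseteq> D" "\<And>u v. E u v \<Longrightarrow> u \<in> D \<Longrightarrow> v \<in> D \<Longrightarrow> f u = f v"
  shows "\<forall>x\<in>set xs. f x = f (hd xs)"
  using assms(1,2)
proof (induction xs rule: induct_list012)
  case (3 x y zs)
  then have "E x y" "successively E (y # zs)" by auto
  moreover have "f x = f y" using assms(3)[OF \<open>E x y\<close>] 3(4) by auto
  ultimately show ?case using 3 by auto
qed auto

lemma obtain_list:
  assumes "n \<le> card A"
  shows "\<exists>xs. distinct xs \<and> length xs = n \<and> set xs \<subseteq> A"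
proof -
  obtain T where "T \<subseteq> A" "card T = n" "finite T" using obtain_subset_with_card_n[OF assms] by blast
  then obtain xs where "set xs = T" "distinct xs" using finite_distinct_list by blast
  thus ?thesis using \<open>T \<subseteq> A\<close> \<open>card T = n\<close> by (intro exI[of _ xs]) (auto simp: distinct_card)
qed

lemma cut_bound:
  assumes "distinct xs" "successively E xs" "set xs \<subseteq> D"
    and comp: "\<And>u v. E u v \<Longrightarrow> u \<in> D - C \<Longrightarrow> v \<in> D - C \<Longrightarrow> f u = f v"
    and blk: "\<And>i. finite {v \<in> D - C. f v = i} \<and> card {v \<in> D - C. f v = i} \<le> s"
  shows "length xs \<le> card (set xs \<inter> C) + (card (set xs \<inter> C) + 1) * s"
  using assms(1-3)
proof (induction "length xs" arbitrary: xs rule: less_induct)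
  case less
  define ys where "ys = takeWhile (\<lambda>v. v \<notin> C) xs"
  define zs where "zs = dropWhile (\<lambda>v. v \<notin> C) xs"
  have xs: "xs = ys @ zs" by (simp add: ys_def zs_def)
  have ysC: "set ys \<inter> C = {}" by (auto simp: ys_def dest: set_takeWhileD)
  have lys: "length ys \<le> s"
  proof (cases "ys = []")
    case True thus ?thesis by simp
  next
    case False
    have sy: "successively E ys" using less.prems(2) xs by (metis successively_append_iff)
    have yD: "set ys \<subseteq> D - C" using less.prems(3) xs ysC by auto
    have "\<forall>x\<in>set ys. f x = f (hd ys)" by (rule same_block[OF sy yD]) (use comp in auto)
    hence "set ys \<subseteq> {v \<in> D - C. f v = f (hd ys)}" using yD by auto
    hence "card (set ys) \<le> card {v \<in> D - C. f v = f (hd ys)}" using blk by (intro card_mono) auto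
    moreover have "card (set ys) = length ys" using less.prems(1) xs by (simp add: distinct_card)
    ultimately show ?thesis using blk[of "f (hd ys)"] by linarith
  qed
  show ?case
  proof (cases zs)
    case Nil
    have "s \<le> (card (set xs \<inter> C) + 1) * s" by simp
    then show ?thesis using xs lys Nil by simp
  next
    case (Cons c zs')
    have cC: "c \<in> C" using Cons hd_dropWhile[of "\<lambda>v. v \<notin> C" xs] unfolding zs_def by auto
    have d: "distinct zs'" "c \<notin> set zs'" using less.prems(1) xs Cons by auto
    have sz: "successively E zs'" using less.prems(2) xs Cons
      by (auto simp: successively_append_iff successively_Cons)
    have IH: "length zs' \<le> card (set zs' \<inter> C) + (card (set zs' \<inter> C) + 1) * s"
      by (rule less.hyps) (use less.prems xs Cons d sz in auto)
    have "set xs \<inter> C = insert c (set zs' \<inter> C)" using xs Cons ysC cC by auto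
    hence "card (set xs \<inter> C) = Suc (card (set zs' \<inter> C))" using d by simp
    moreover have "length xs = length ys + 1 + length zs'" using xs Cons by simp
    ultimately show ?thesis using IH lys by (simp add: algebra_simps)
  qed
qed


locale cons =
  fixes a b d m :: nat
  assumes m1: "1 \<le> m" and a1: "1 \<le> a" and bdef: "b = Suc a"
begin

definition g :: "nat \<Rightarrow> nat" where "g v = (v - a) div m"
definition VV :: "nat set" where
  "VV = {v. v < a \<or> (a \<le> v \<and> g v < b + d \<and> (g v < b \<longrightarrow> (v - a) mod m < m - 1))}"
definition EE :: "nat \<Rightarrow> nat \<Rightarrow> bool" where
  "EE u v \<longleftrightarrow> u \<noteq> v \<and> u \<in> VV \<and> v \<in> VV \<and> ((u < a \<and> v < a) \<or> (u < a \<and> a \<le> v \<and> (g v < b \<or> u = 0))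
     \<or> (v < a \<and> a \<le> u \<and> (g u < b \<or> v = 0)) \<or> (a \<le> u \<and> a \<le> v \<and> g u = g v))"
definition L :: "nat set" where "L = {v. a \<le> v \<and> g v < b \<and> (v - a) mod m < m - 1}"

lemma g_blk: "i < m \<Longrightarrow> g (a + j*m + i) = j"
  unfolding g_def using m1 by simp

lemma mod_blk: "i < m \<Longrightarrow> (a + j*m + i - a) mod m = i"
  using m1 by simp

lemma decomp: "a \<le> v \<Longrightarrow> v = a + g v * m + (v - a) mod m"
  unfolding g_def by (metis add_diff_inverse_nat div_mult_mod_eq not_less add.assoc)

lemma fin: "finite VV"
proof -
  have "VV \<subseteq> {..< a + (b+d)*m}"
  proof
    fix v assume v: "v \<in> VV"
    show "v \<in> {..< a + (b+d)*m}"
    proof (cases "v < a")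
      case False
      hence "g v < b + d" using v by (auto simp: VV_def)
      hence "v - a < (b+d)*m" unfolding g_def using m1
        by (simp add: div_less_iff_less_mult)
      thus ?thesis by auto
    qed auto
  qed
  thus ?thesis using finite_subset by blast
qed

lemma is_graph: "graph VV EE"
  unfolding graph_def using fin a1 by (auto simp: EE_def VV_def)

lemma conn: "connected_graph VV EE"
  unfolding connected_graph_def
proof (intro ballI)
  fix u v assume u: "u \<in> VV" and v: "v \<in> VV"
  have z: "0 \<in> VV" using a1 by (auto simp: VV_def)
  have to0: "EE\<^sup>*\<^sup>* w 0" if "w \<in> VV" for w
    using that z a1 by (cases "w = 0") (auto simp: EE_def intro!: r_into_rtranclp)
  have from0: "EE\<^sup>*\<^sup>* 0 w" if "w \<in> VV" for w
    using that z a1 by (cases "w = 0") (auto simp: EE_def intro!: r_into_rtranclp)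
  show "EE\<^sup>*\<^sup>* u v" using to0[OF u] from0[OF v] by (rule rtranclp_trans)
qed

lemma EE_hi: "EE u v \<Longrightarrow> a \<le> u \<Longrightarrow> a \<le> v \<Longrightarrow> g u = g v"
  unfolding EE_def by auto

lemma L_VV: "L \<subseteq> VV"
  unfolding L_def VV_def by auto

lemma adj: "u \<in> {..<a} \<union> L \<Longrightarrow> v \<in> {..<a} \<union> L \<Longrightarrow> u \<noteq> v \<Longrightarrow> (u < a \<or> v < a \<or> g u = g v) \<Longrightarrow> EE u v"
  unfolding EE_def using L_VV by (auto simp: L_def VV_def)

definition legl :: "nat \<Rightarrow> nat list" where "legl j = [a + j*m ..< a + j*m + (m - 1)]"

lemma legl_set: "j < b \<Longrightarrow> set (legl j) \<subseteq> {v. a \<le> v \<and> g v = j \<and> (v - a) mod m < m - 1}"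
proof
  fix v assume "j < b" "v \<in> set (legl j)"
  then obtain i where i: "i < m - 1" "v = a + j*m + i" unfolding legl_def
    by (metis atLeastLessThan_iff le_Suc_ex nat_add_left_cancel_less set_upt)
  hence "i < m" by simp
  thus "v \<in> {v. a \<le> v \<and> g v = j \<and> (v - a) mod m < m - 1}" using i g_blk mod_blk by auto
qed

lemma legl_L: "j < b \<Longrightarrow> set (legl j) \<subseteq> L"
  using legl_set unfolding L_def by fastforce

lemma legl_succ: "j < b \<Longrightarrow> successively EE (legl j)"
  unfolding successively_conv_nth
proof (intro allI impI)
  fix i assume j: "j < b" and i: "Suc i < length (legl j)"
  have "legl j ! i \<in> set (legl j)" "legl j ! Suc i \<in> set (legl j)" using i by auto
  moreover have "legl j ! i \<noteq> legl j ! Suc i" using i by (simp add: legl_def)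
  moreover have "g (legl j ! i) = j" "g (legl j ! Suc i) = j"
    using calculation(1,2) legl_set[OF j] by blast+
  ultimately show "EE (legl j ! i) (legl j ! Suc i)"
    using legl_L[OF j] by (intro adj) auto
qed

fun mk :: "nat list \<Rightarrow> nat list \<Rightarrow> nat list" where
  "mk (j # js) (c # cs) = legl j @ c # mk js cs"
| "mk [j] [] = legl j"
| "mk _ _ = []"

lemma mk_props:
  "length js = Suc (length cs) \<Longrightarrow> distinct js \<Longrightarrow> distinct cs \<Longrightarrow> set cs \<subseteq> {..<a} \<Longrightarrow> set js \<subseteq> {..<b} \<Longrightarrow>
   distinct (mk js cs) \<and> successively EE (mk js cs) \<and>
   set (mk js cs) \<subseteq> set cs \<union> {v. a \<le> v \<and> g v \<in> set js \<and> (v - a) mod m < m - 1} \<and>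
   length (mk js cs) = length cs * m + (m - 1)"
proof (induction cs arbitrary: js)
  case Nil
  then obtain j where js: "js = [j]" by (cases js) auto
  have "j < b" using Nil js by auto
  then show ?case using js legl_set[of j] legl_succ[of j] by (auto simp: legl_def)
next
  case (Cons c cs)
  then obtain j js' where js: "js = j # js'" by (cases js) auto
  have jb: "j < b" "j \<notin> set js'" using Cons.prems js by auto
  have IH: "distinct (mk js' cs) \<and> successively EE (mk js' cs) \<and>
   set (mk js' cs) \<subseteq> set cs \<union> {v. a \<le> v \<and> g v \<in> set js' \<and> (v - a) mod m < m - 1} \<and>
   length (mk js' cs) = length cs * m + (m - 1)"
    using Cons.prems js by (intro Cons.IH) auto
  have ca: "c < a" "c \<notin> set cs" using Cons.prems by auto
  have lset: "set (legl j) \<subseteq> {v. a \<le> v \<and> g v = j \<and> (v - a) mod m < m - 1}" using legl_set[OF jb(1)] .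
  have mW: "set (mk js' cs) \<subseteq> {..<a} \<union> L" using IH Cons.prems js unfolding L_def by auto
  have cnot: "c \<notin> set (mk js' cs)" using IH ca by auto
  have disj: "set (legl j) \<inter> set (mk js' cs) = {}"
  proof -
    have "x \<notin> set (mk js' cs)" if "x \<in> set (legl j)" for x
      using that lset IH jb(2) Cons.prems(4) by fastforce
    thus ?thesis by blast
  qed
  have "c \<notin> set (legl j)" using lset ca by auto
  moreover have "distinct (legl j)" by (simp add: legl_def)
  ultimately have dis: "distinct (legl j @ c # mk js' cs)"
    using IH disj cnot by auto
  have s1: "successively EE (c # mk js' cs)"
  proof -
    have "mk js' cs \<noteq> [] \<Longrightarrow> EE c (hd (mk js' cs))"
      using mW cnot ca by (intro adj) (auto dest!: hd_in_set)
    thus ?thesis using IH by (auto simp: successively_Cons)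
  qed
  have s2: "legl j \<noteq> [] \<Longrightarrow> EE (last (legl j)) c"
    using legl_L[OF jb(1)] ca by (intro adj) (auto dest!: last_in_set simp: L_def)
  have suc: "successively EE (legl j @ c # mk js' cs)"
    using legl_succ[OF jb(1)] s1 s2 by (auto simp: successively_append_iff)
  have st: "set (legl j @ c # mk js' cs) \<subseteq> set (c # cs) \<union> {v. a \<le> v \<and> g v \<in> set js \<and> (v - a) mod m < m - 1}"
    using IH lset js by auto
  have len: "length (legl j @ c # mk js' cs) = length (c # cs) * m + (m - 1)"
    using IH m1 by (simp add: legl_def algebra_simps)
  show ?case using dis suc st len js by simp
qed


lemma long_path:
  assumes "1 \<le> t" "t \<le> card ({..<a} - S)" "Suc t \<le> card ({..<b} - g ` (S - {..<a}))"
  shows "\<exists>xs. is_path VV EE xs \<and> length xs = t*m + (m-1) \<and> set xs \<inter> S = {}"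
proof -
  obtain cs where cs: "distinct cs" "length cs = t" "set cs \<subseteq> {..<a} - S"
    using obtain_list[OF assms(2)] by blast
  obtain js where js: "distinct js" "length js = Suc t" "set js \<subseteq> {..<b} - g ` (S - {..<a})"
    using obtain_list[OF assms(3)] by blast
  have P: "distinct (mk js cs) \<and> successively EE (mk js cs) \<and>
   set (mk js cs) \<subseteq> set cs \<union> {v. a \<le> v \<and> g v \<in> set js \<and> (v - a) mod m < m - 1} \<and>
   length (mk js cs) = length cs * m + (m - 1)"
    using cs js by (intro mk_props) auto
  have "set (mk js cs) \<subseteq> VV"
  proof
    fix v assume "v \<in> set (mk js cs)"
    hence "v \<in> set cs \<or> (a \<le> v \<and> g v \<in> set js \<and> (v - a) mod m < m - 1)" using P by auto
    thus "v \<in> VV" using cs js L_VV by (auto simp: VV_def L_def)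
  qed
  moreover have "set (mk js cs) \<inter> S = {}"
  proof -
    have "v \<notin> S" if "v \<in> set (mk js cs)" for v
    proof
      assume vS: "v \<in> S"
      have "v \<in> set cs \<or> (a \<le> v \<and> g v \<in> set js)" using P that by auto
      thus False using cs js vS by auto
    qed
    thus ?thesis by auto
  qed
  moreover have "mk js cs \<noteq> []"
  proof -
    have len: "length (mk js cs) = t*m + (m-1)" using P cs by simp
    have "1 * 1 \<le> t * m" using assms(1) m1 by (intro mult_le_mono) auto
    hence "length (mk js cs) \<noteq> 0" using len by linarith
    thus ?thesis by auto
  qed
  ultimately show ?thesis using P cs by (intro exI[of _ "mk js cs"]) (auto simp: is_path_succ)
qed

lemma card_split:
  assumes "S \<subseteq> VV"
  shows "card S = card (S \<inter> {..<a}) + card (S - {..<a})"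
proof -
  have "finite S" using assms fin finite_subset by blast
  thus ?thesis by (metis card_Int_Diff)
qed

lemma psi_k:
  assumes q: "1 \<le> q" "q \<le> a" "q*m \<le> k" "k \<le> q*m + (m-1)" "m < k"
  shows "psi k VV EE = a - q + 1"
proof (rule psi_eqI[of _ _ _ "{..< a - q + 1}"])
  obtain m' where m': "m = Suc m'" using m1 by (cases m) auto
  show "is_kpvc VV EE k {..<a-q+1}"
    unfolding is_kpvc_def
  proof (intro conjI allI impI)
    show "{..<a-q+1} \<subseteq> VV" using q by (auto simp: VV_def)
    fix xs assume "is_path VV EE xs \<and> length xs = k"
    hence xs: "xs \<noteq> []" "distinct xs" "set xs \<subseteq> VV" "successively EE xs" "length xs = k"
      by (auto simp: is_path_succ)
    show "set xs \<inter> {..<a-q+1} \<noteq> {}"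
    proof
      assume av: "set xs \<inter> {..<a-q+1} = {}"
      define D where "D = VV - {..<a-q+1}"
      define P where "P = {v. a \<le> v \<and> b \<le> g v}"
      have xD: "set xs \<subseteq> D" unfolding D_def using xs(3) av by blast
      have compP: "(u \<in> P) = (v \<in> P)" if "EE u v" "u \<in> D" "v \<in> D" for u v
        using that q unfolding D_def P_def EE_def by auto
      have allP: "\<forall>x\<in>set xs. (x\<in>P) = (hd xs \<in> P)" by (rule same_block[OF xs(4) xD compP])
      show False
      proof (cases "hd xs \<in> P")
        case True
        hence xP: "set xs \<subseteq> D \<inter> P" using allP xD by auto
        have allg: "\<forall>x\<in>set xs. g x = g (hd xs)"
          by (rule same_block[OF xs(4) xP]) (use EE_hi in \<open>auto simp: P_def\<close>)
        define l where "l = a + g (hd xs) * m"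
        have "set xs \<subseteq> {l ..< l + m}"
        proof
          fix x assume x: "x \<in> set xs"
          hence "a \<le> x" using xP P_def by auto
          hence "x = a + g x * m + (x - a) mod m" by (rule decomp)
          moreover have "(x - a) mod m < m" using m1 by simp
          ultimately show "x \<in> {l..<l+m}" using allg x l_def by (metis atLeastLessThan_iff le_add1 add_less_cancel_left)
        qed
        hence "card (set xs) \<le> m" using card_mono[of "{l..<l+m}" "set xs"] by simp
        thus False using xs q distinct_card[of xs] by simp
      next
        case False
        hence xQ: "set xs \<subseteq> D - P" using allP xD by auto
        have cb: "length xs \<le> card (set xs \<inter> {..<a}) + (card (set xs \<inter> {..<a}) + 1) * (m - 1)"
        proof (rule cut_bound[where D = "D - P" and C = "{..<a}" and f = g and E = EE])
          show "distinct xs" "successively EE xs" "set xs \<subseteq> D - P" using xs xQ by auto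
          show "g u = g v" if "EE u v" "u \<in> D - P - {..<a}" "v \<in> D - P - {..<a}" for u v
            using EE_hi that by auto
          fix i
          have sub: "{v \<in> D - P - {..<a}. g v = i} \<subseteq> {a + i*m ..< a + i*m + (m - 1)}"
          proof
            fix v assume v: "v \<in> {v \<in> D - P - {..<a}. g v = i}"
            hence av: "a \<le> v" "v \<in> VV" "g v < b" "g v = i" using D_def P_def by auto
            hence "(v - a) mod m < m - 1" by (auto simp: VV_def)
            moreover have "v = a + g v * m + (v - a) mod m" using av by (intro decomp)
            ultimately show "v \<in> {a + i*m ..< a + i*m + (m - 1)}" using av
              by (metis atLeastLessThan_iff le_add1 add_less_cancel_left)
          qed
          show "finite {v \<in> D - P - {..<a}. g v = i} \<and> card {v \<in> D - P - {..<a}. g v = i} \<le> m - 1"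
            using card_mono[OF _ sub] finite_subset[OF sub] by auto
        qed
        have "set xs \<inter> {..<a} \<subseteq> {a-q+1..<a}" using av by auto
        hence c: "card (set xs \<inter> {..<a}) \<le> q - 1"
          using card_mono[of "{a-q+1..<a}" "set xs \<inter> {..<a}"] q by simp
        have "card (set xs \<inter> {..<a}) + (card (set xs \<inter> {..<a}) + 1) * (m - 1) \<le> (q - 1) + q * (m - 1)"
        proof -
          have "(card (set xs \<inter> {..<a}) + 1) * (m - 1) \<le> q * (m - 1)"
            using c q by (intro mult_le_mono1) simp
          thus ?thesis using c by linarith
        qed
        moreover have "(q - 1) + q * (m - 1) < q * m" using q m' by simp
        ultimately show False using cb xs q by linarith
      qed
    qed
  qed
  show "card {..<a-q+1} = a - q + 1" by simp
  fix S assume kp: "is_kpvc VV EE k S"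
  show "a - q + 1 \<le> card S"
  proof (rule ccontr)
    assume "\<not> a - q + 1 \<le> card S"
    hence cS: "card S \<le> a - q" by simp
    have SV: "S \<subseteq> VV" using kp unfolding is_kpvc_def by blast
    have fS: "finite S" using SV fin finite_subset by blast
    have cs: "card S = card (S \<inter> {..<a}) + card (S - {..<a})" using card_split[OF SV] .
    have c1: "q \<le> card ({..<a} - S)"
    proof -
      have "card ({..<a} - S) = a - card ({..<a} \<inter> S)" by (simp add: card_Diff_subset_Int)
      moreover have "card ({..<a} \<inter> S) \<le> card S" using fS by (intro card_mono) auto
      ultimately show ?thesis using cS q by linarith
    qed
    have c2: "Suc q \<le> card ({..<b} - g ` (S - {..<a}))"
    proof -
      have "card ({..<b} - g ` (S - {..<a})) = b - card ({..<b} \<inter> g ` (S - {..<a}))"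
        by (simp add: card_Diff_subset_Int)
      moreover have "card ({..<b} \<inter> g ` (S - {..<a})) \<le> card (g ` (S - {..<a}))"
        using fS by (intro card_mono) auto
      moreover have "card (g ` (S - {..<a})) \<le> card (S - {..<a})" using fS by (intro card_image_le) auto
      ultimately show ?thesis using cS cs bdef q by linarith
    qed
    obtain xs where xs: "is_path VV EE xs" "length xs = q*m + (m-1)" "set xs \<inter> S = {}"
      using long_path[OF q(1) c1 c2] by blast
    have "is_path VV EE (take k xs)" using xs q by (intro is_path_take) auto
    moreover have "length (take k xs) = k" using xs q by simp
    moreover have "set (take k xs) \<inter> S = {}" using xs set_take_subset[of k xs] by auto
    ultimately show False using kp unfolding is_kpvc_def by blast
  qed
qed


lemma blkv: "j < b + d \<Longrightarrow> i < m \<Longrightarrow> (j < b \<Longrightarrow> i < m - 1) \<Longrightarrow> a + j*m + i \<in> VV"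
  unfolding VV_def using g_blk mod_blk by auto

lemma psi_m: "psi m VV EE = a + d"
proof (rule psi_eqI[of _ _ _ "{..<a} \<union> (\<lambda>j. a + j*m) ` {b..<b+d}"])
  define S1 where "S1 = {..<a} \<union> (\<lambda>j. a + j*m) ` {b..<b+d}"
  have inj: "inj_on (\<lambda>j. a + j*m) {b..<b+d}" using m1 by (auto simp: inj_on_def)
  show "card ({..<a} \<union> (\<lambda>j. a + j*m) ` {b..<b+d}) = a + d"
    by (subst card_Un_disjoint) (auto simp: card_image[OF inj])
  show "is_kpvc VV EE m ({..<a} \<union> (\<lambda>j. a + j*m) ` {b..<b+d})"
    unfolding is_kpvc_def S1_def[symmetric]
  proof (intro conjI allI impI)
    show "S1 \<subseteq> VV"
    proof
      fix v assume "v \<in> S1"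
      have gj: "\<And>j. g (a + j*m) = j" using g_blk[of 0] m1 by simp
      show "v \<in> VV" using \<open>v \<in> S1\<close> unfolding S1_def using gj by (auto simp: VV_def)
    qed
    fix xs assume "is_path VV EE xs \<and> length xs = m"
    hence xs: "xs \<noteq> []" "distinct xs" "set xs \<subseteq> VV" "successively EE xs" "length xs = m"
      by (auto simp: is_path_succ)
    show "set xs \<inter> S1 \<noteq> {}"
    proof
      assume av: "set xs \<inter> S1 = {}"
      define D where "D = VV - S1"
      have xD: "set xs \<subseteq> D" unfolding D_def using xs(3) av by blast
      have Dge: "a \<le> v" if "v \<in> D" for v using that unfolding D_def S1_def by auto
      have allg: "\<forall>x\<in>set xs. g x = g (hd xs)"
        by (rule same_block[OF xs(4) xD]) (use EE_hi Dge in auto)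
      define j where "j = g (hd xs)"
      define l where "l = (if j < b then a + j*m else a + j*m + 1)"
      have "set xs \<subseteq> {l ..< l + (m - 1)}"
      proof
        fix x assume x: "x \<in> set xs"
        hence ax: "a \<le> x" "x \<in> VV" "x \<notin> S1" "g x = j" using xD Dge allg j_def xs(3) av by auto
        hence dx: "x = a + j * m + (x - a) mod m" using decomp by metis
        have r: "(x - a) mod m < m" using m1 by simp
        define r where "r = (x - a) mod m"
        have dx': "x = a + j*m + r" using dx r_def by simp
        show "x \<in> {l..<l + (m - 1)}"
        proof (cases "j < b")
          case True
          hence "r < m - 1" using ax r_def by (auto simp: VV_def)
          thus ?thesis using True dx' l_def by simp
        next
          case False
          have "j < b + d" using ax by (auto simp: VV_def)
          have "r \<noteq> 0"
          proof
            assume "r = 0"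
            hence "x = a + j*m" using dx' by simp
            hence "x \<in> S1" unfolding S1_def using False \<open>j < b + d\<close> by auto
            thus False using ax by simp
          qed
          moreover have "r < m" using r r_def by simp
          ultimately show ?thesis using False dx' l_def by auto
        qed
      qed
      hence "card (set xs) \<le> m - 1" using card_mono[of "{l..<l+(m-1)}" "set xs"] by simp
      thus False using xs m1 distinct_card[of xs] by simp
    qed
  qed
  fix S assume kp: "is_kpvc VV EE m S"
  show "a + d \<le> card S"
  proof (rule ccontr)
    assume "\<not> a + d \<le> card S"
    hence cS: "card S < a + d" by simp
    have SV: "S \<subseteq> VV" using kp unfolding is_kpvc_def by blast
    have fS: "finite S" using SV fin finite_subset by blast
    have cs: "card S = card (S \<inter> {..<a}) + card (S - {..<a})" using card_split[OF SV] .
    define G where "G = g ` (S - {..<a})"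
    have fG: "finite G" using fS G_def by simp
    show False
    proof (cases "{b..<b+d} \<subseteq> G")
      case False
      obtain j where j: "b \<le> j" "j < b + d" "j \<notin> G" using \<open>\<not> {b..<b+d} \<subseteq> G\<close> by (meson atLeastLessThan_iff subsetI)
      define xs where "xs = [a + j*m ..< a + j*m + m]"
      have mem: "\<exists>i<m. x = a + j*m + i" if "x \<in> set xs" for x
        using that unfolding xs_def by (metis atLeastLessThan_iff le_Suc_ex nat_add_left_cancel_less set_upt)
      have xV: "set xs \<subseteq> VV" using mem blkv j by fastforce
      have xg: "a \<le> x \<and> g x = j" if "x \<in> set xs" for x using mem[OF that] g_blk by auto
      have "is_path VV EE xs"
        unfolding is_path_succ successively_conv_nth
      proof (intro conjI allI impI)
        show "xs \<noteq> []" "distinct xs" using m1 by (auto simp: xs_def)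
        show "set xs \<subseteq> VV" by (rule xV)
        fix i assume i: "Suc i < length xs"
        have "xs ! i \<in> set xs" "xs ! Suc i \<in> set xs" using i by auto
        moreover have "xs ! i \<noteq> xs ! Suc i" using i by (simp add: xs_def)
        ultimately show "EE (xs ! i) (xs ! Suc i)" using xV xg unfolding EE_def by blast
      qed
      moreover have "length xs = m" by (simp add: xs_def)
      moreover have "set xs \<inter> S = {}"
      proof -
        have "x \<notin> S" if "x \<in> set xs" for x
          using xg[OF that] j(3) unfolding G_def by auto
        thus ?thesis by auto
      qed
      ultimately show False using kp unfolding is_kpvc_def by blast
    next
      case True
      have "card G \<ge> card (G \<inter> {..<b}) + d"
      proof -
        have "(G \<inter> {..<b}) \<union> {b..<b+d} \<subseteq> G" using True by auto
        hence "card ((G \<inter> {..<b}) \<union> {b..<b+d}) \<le> card G" using fG by (intro card_mono) auto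
        moreover have "card ((G \<inter> {..<b}) \<union> {b..<b+d}) = card (G \<inter> {..<b}) + d"
          using fG by (subst card_Un_disjoint) auto
        ultimately show ?thesis by simp
      qed
      moreover have "card G \<le> card (S - {..<a})" unfolding G_def using fS by (intro card_image_le) auto
      ultimately have tot: "card (S \<inter> {..<a}) + card (G \<inter> {..<b}) + d < a + d" using cs cS by linarith
      have c1: "1 \<le> card ({..<a} - S)"
      proof -
        have "card ({..<a} - S) = a - card (S \<inter> {..<a})" by (simp add: card_Diff_subset_Int Int_commute)
        thus ?thesis using tot by linarith
      qed
      have c2: "Suc 1 \<le> card ({..<b} - g ` (S - {..<a}))"
      proof -
        have "card ({..<b} - G) = b - card (G \<inter> {..<b})" by (simp add: card_Diff_subset_Int Int_commute)
        thus ?thesis using tot bdef unfolding G_def[symmetric] by linarith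
      qed
      obtain xs where xs: "is_path VV EE xs" "length xs = 1*m + (m-1)" "set xs \<inter> S = {}"
        using long_path[OF _ c1 c2] by blast
      have "is_path VV EE (take m xs)" using xs m1 by (intro is_path_take) auto
      moreover have "length (take m xs) = m" using xs by simp
      moreover have "set (take m xs) \<inter> S = {}" using xs set_take_subset[of m xs] by auto
      ultimately show False using kp unfolding is_kpvc_def by blast
    qed
  qed
qed

end


theorem mainTheorem6:
  fixes k m :: nat and pk pm :: int
  assumes "1 \<le> m" and "m < k"
    and "pk > 0"
    and "pm \<ge> pk + \<lfloor>real k / real m\<rfloor> - 1"
  shows "\<exists>(V :: nat set) E. graph V E \<and> connected_graph V E
           \<and> int (psi k V E) = pk \<and> int (psi m V E) = pm"
proof -
  define q where "q = k div m"
  define a where "a = nat pk + q - 1"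
  define d where "d = nat pm - a"
  have "0 < k div m" using assms(1,2) by (simp add: div_greater_zero_iff)
  hence q1: "1 \<le> q" unfolding q_def by simp
  have dm: "q * m + k mod m = k" unfolding q_def by simp
  have mm: "k mod m < m" using assms(1) by simp
  have qm: "q*m \<le> k" "k \<le> q*m + (m-1)" using dm mm by linarith+
  have fl: "\<lfloor>real k / real m\<rfloor> = int q" unfolding q_def
    using floor_divide_of_nat_eq[of k m] by simp
  have pk1: "1 \<le> nat pk" using assms(3) by simp
  have aa: "1 \<le> a" "q \<le> a" using pk1 q1 a_def by auto
  have ia: "int a = pk + int q - 1" unfolding a_def using pk1 q1 assms(3) by (simp add: of_nat_diff)
  have pma: "int a \<le> pm" using assms(4) fl ia by linarith
  interpret cons a "Suc a" d m by unfold_locales (use assms(1) aa in auto)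
  have "psi k VV EE = a - q + 1" using psi_k[OF q1 aa(2) qm assms(2)] .
  hence e1: "int (psi k VV EE) = pk" using a_def pk1 q1 assms(3) by simp
  have e2: "int (psi m VV EE) = pm" using psi_m d_def pma by simp
  show ?thesis using is_graph conn e1 e2 by blast
qed

end
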